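(* Let $\Sigma\in\mathbb{R}^{N\times N}$ be a diagonal matrix with positive diagonal, $\mu\in\mathbb{R}^N$, $\gamma\in[0,1]$, and $\mathcal T$ any binary tree whose leaves are the assets $1,\dots,N$. Then the weight vector produced by the HRP-$\Sigma\mu$ algorithm is proportional to the Markowitz solution $\Sigma^{-1}\mu$.
   Context: HRP-$\Sigma\mu$ algorithm (inputs $\Sigma,\mu,\mathcal T,\gamma$), defined recursively. At a leaf (asset $i$) return $\hat w=(1)$, $v=\Sigma_{ii}$, $s=\mu_i$. At an internal node $n$ with left and right subtrees having leaf index sets $L,R$: recursively obtain $(\hat w_L,v_L,s_L)$ and $(\hat w_R,v_R,s_R)$; set $c=\hat w_L^\top\Sigma_{LR}\hat w_R$, $\Delta=v_Lv_R-\gamma^2c^2$, $\alpha_L^{\mathrm{raw}}=(v_Rs_L-\gamma cs_R)/\Delta$, $\alpha_R^{\mathrm{raw}}=(v_Ls_R-\gamma cs_L)/\Delta$, $Z=|\alpha_L^{\mathrm{raw}}|+|\alpha_R^{\mathrm{raw}}|$, $\alpha_k=\alpha_k^{\mathrm{raw}}/Z$; the node representative is the stacked vector $\hat w_n=(\alpha_L\hat w_L,\alpha_R\hat w_R)\in\mathbb{R}^{L\cup R}$, with $v_n=\hat w_n^\top\Sigma_{nn}\hat w_n$ and $s_n=\hat w_n^\top\mu_n$. The output weight vector is the representative at the root. *)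

theory Defs
  imports "HOL-Analysis.Analysis"
begin

datatype 'a btree = Leaf 'a | Node "'a btree" "'a btree"

fun leaves :: "'a btree \<Rightarrow> 'a list" where
  "leaves (Leaf i) = [i]"
| "leaves (Node l r) = leaves l @ leaves r"

text \<open>HRP-Sg-mu recursion. Returns (representative weight vector, supported on the
  leaves of the subtree and zero elsewhere; its variance v; its score s).\<close>
fun hrp :: "real^'n^'n \<Rightarrow> real^'n \<Rightarrow> real \<Rightarrow> 'n btree \<Rightarrow> ('n \<Rightarrow> real) \<times> real \<times> real" where
  "hrp Sg mu gamma (Leaf i) = ((\<lambda>j. if j = i then 1 else 0), Sg $ i $ i, mu $ i)"
| "hrp Sg mu gamma (Node l r) =
    (let (wL, vL, sL) = hrp Sg mu gamma l;
         (wR, vR, sR) = hrp Sg mu gamma r;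
         L = set (leaves l); R = set (leaves r);
         c = (\<Sum>i\<in>L. \<Sum>j\<in>R. wL i * Sg $ i $ j * wR j);
         D = vL * vR - gamma\<^sup>2 * c\<^sup>2;
         aLr = (vR * sL - gamma * c * sR) / D;
         aRr = (vL * sR - gamma * c * sL) / D;
         Z = \<bar>aLr\<bar> + \<bar>aRr\<bar>;
         aL = aLr / Z; aR = aRr / Z;
         w = (\<lambda>k. if k \<in> L then aL * wL k else if k \<in> R then aR * wR k else 0);
         v = (\<Sum>i\<in>L \<union> R. \<Sum>j\<in>L \<union> R. w i * Sg $ i $ j * w j);
         s = (\<Sum>i\<in>L \<union> R. w i * mu $ i)
     in (w, v, s))"

definition hrp_weights :: "real^'n^'n \<Rightarrow> real^'n \<Rightarrow> real \<Rightarrow> 'n btree \<Rightarrow> real^'n" where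
  "hrp_weights Sg mu gamma T = (\<chi> k. fst (hrp Sg mu gamma T) k)"

end

theory Submission
  imports Defs
begin

lemma diag_double_sum:
  fixes Sg :: "real^'n^'n"
  assumes diag: "\<And>i j. i \<noteq> j \<Longrightarrow> Sg $ i $ j = 0" and fin: "finite S"
  shows "(\<Sum>i\<in>S. \<Sum>j\<in>S. w i * Sg $ i $ j * w j) = (\<Sum>i\<in>S. (w i)^2 * Sg $ i $ i)"
proof (rule sum.cong[OF refl])
  fix i assume i: "i \<in> S"
  have "(\<Sum>j\<in>S. w i * Sg $ i $ j * w j) = (\<Sum>j\<in>S. if j = i then w i * Sg $ i $ i * w i else 0)"
    by (rule sum.cong) (auto simp: diag)
  also have "\<dots> = w i * Sg $ i $ i * w i" using fin i by simp
  finally show "(\<Sum>j\<in>S. w i * Sg $ i $ j * w j) = (w i)^2 * Sg $ i $ i"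
    by (simp add: power2_eq_square)
qed

lemma prop_inv:
  fixes Sg :: "real^'n^'n"
  assumes diag: "\<And>i j. i \<noteq> j \<Longrightarrow> Sg $ i $ j = 0" and pos: "\<And>i. Sg $ i $ i > 0"
    and fin: "finite S" and wt: "\<forall>i\<in>S. w i = t * (mu $ i / Sg $ i $ i)"
  shows "(\<forall>k\<in>S. (\<Sum>i\<in>S. w i * mu $ i) * w k
            = (\<Sum>i\<in>S. \<Sum>j\<in>S. w i * Sg $ i $ j * w j) * (mu $ k / Sg $ k $ k))
         \<and> (\<Sum>i\<in>S. \<Sum>j\<in>S. w i * Sg $ i $ j * w j) = (\<Sum>i\<in>S. (w i)^2 * Sg $ i $ i)"
proof -
  define q where "q = (\<Sum>i\<in>S. mu $ i * mu $ i / Sg $ i $ i)"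
  have s: "(\<Sum>i\<in>S. w i * mu $ i) = t * q"
    unfolding q_def sum_distrib_left by (rule sum.cong) (auto simp: wt)
  have "(\<Sum>i\<in>S. (w i)^2 * Sg $ i $ i) = (\<Sum>i\<in>S. t * t * (mu $ i * mu $ i / Sg $ i $ i))"
  proof (rule sum.cong[OF refl])
    fix i assume "i \<in> S"
    then show "(w i)^2 * Sg $ i $ i = t * t * (mu $ i * mu $ i / Sg $ i $ i)"
      using pos[of i] by (simp add: wt power2_eq_square field_simps)
  qed
  also have "\<dots> = t * t * q" unfolding q_def sum_distrib_left ..
  finally have v: "(\<Sum>i\<in>S. (w i)^2 * Sg $ i $ i) = t * t * q" .
  show ?thesis
    using diag_double_sum[OF diag fin, of w] s v wt by (auto simp: algebra_simps)
qed

lemma hrp_inv: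
  fixes Sg :: "real^'n^'n"
  assumes diag: "\<And>i j. i \<noteq> j \<Longrightarrow> Sg $ i $ j = 0" and pos: "\<And>i. Sg $ i $ i > 0"
    and dist: "distinct (leaves T)"
  shows "(\<forall>k\<in>set (leaves T). snd (snd (hrp Sg mu gamma T)) * fst (hrp Sg mu gamma T) k
            = fst (snd (hrp Sg mu gamma T)) * (mu $ k / Sg $ k $ k))
         \<and> fst (snd (hrp Sg mu gamma T)) = (\<Sum>i\<in>set (leaves T). (fst (hrp Sg mu gamma T) i)^2 * Sg $ i $ i)"
  using dist
proof (induction T)
  case (Leaf i)
  then show ?case using pos[of i] by simp
next
  case (Node l r)
  obtain wL vL sL where hl: "hrp Sg mu gamma l = (wL, vL, sL)" by (cases "hrp Sg mu gamma l") auto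
  obtain wR vR sR where hr: "hrp Sg mu gamma r = (wR, vR, sR)" by (cases "hrp Sg mu gamma r") auto
  define L where "L = set (leaves l)"
  define R where "R = set (leaves r)"
  have dl: "distinct (leaves l)" and dr: "distinct (leaves r)" and disj: "L \<inter> R = {}"
    using Node.prems by (auto simp: L_def R_def)
  have IHL: "\<forall>k\<in>L. sL * wL k = vL * (mu $ k / Sg $ k $ k)"
    using Node.IH(1)[OF dl] hl L_def by simp
  have IHR: "\<forall>k\<in>R. sR * wR k = vR * (mu $ k / Sg $ k $ k)"
    using Node.IH(2)[OF dr] hr R_def by simp
  have c0: "(\<Sum>i\<in>L. \<Sum>j\<in>R. wL i * Sg $ i $ j * wR j) = 0"
  proof -
    have z: "Sg $ x $ y = 0" if "x \<in> L" "y \<in> R" for x y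
      using disj that by (intro diag) blast
    show ?thesis by (auto intro!: sum.neutral simp: z)
  qed
  define c where "c = (\<Sum>i\<in>L. \<Sum>j\<in>R. wL i * Sg $ i $ j * wR j)"
  define aLr where "aLr = (vR * sL - gamma * c * sR) / (vL * vR - gamma\<^sup>2 * c\<^sup>2)"
  define aRr where "aRr = (vL * sR - gamma * c * sL) / (vL * vR - gamma\<^sup>2 * c\<^sup>2)"
  define Z where "Z = \<bar>aLr\<bar> + \<bar>aRr\<bar>"
  define w where "w = (\<lambda>k. if k \<in> L then aLr / Z * wL k else if k \<in> R then aRr / Z * wR k else 0)"
  have hn: "hrp Sg mu gamma (Node l r) = (w, (\<Sum>i\<in>L \<union> R. \<Sum>j\<in>L \<union> R. w i * Sg $ i $ j * w j),
       (\<Sum>i\<in>L \<union> R. w i * mu $ i))"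
    unfolding w_def Z_def aLr_def aRr_def c_def L_def R_def by (simp add: hl hr Let_def)
  have "\<exists>t. \<forall>i\<in>L \<union> R. w i = t * (mu $ i / Sg $ i $ i)"
  proof (cases "vL = 0 \<or> vR = 0 \<or> Z = 0")
    case True
    then have "aLr / Z = 0" "aRr / Z = 0" using c0 by (auto simp: aLr_def aRr_def c_def)
    then show ?thesis by (intro exI[of _ 0]) (auto simp: w_def)
  next
    case False
    then have a1: "aLr = sL / vL" and a2: "aRr = sR / vR"
      using c0 by (auto simp: aLr_def aRr_def c_def field_simps)
    show ?thesis
    proof (intro exI[of _ "1/Z"] ballI)
      fix i assume "i \<in> L \<union> R"
      then consider "i \<in> L" | "i \<in> R" "i \<notin> L" by blast
      then show "w i = 1 / Z * (mu $ i / Sg $ i $ i)"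
      proof cases
        case 1
        then have "sL * wL i = vL * (mu $ i / Sg $ i $ i)" using IHL by blast
        then show ?thesis using 1 False by (simp add: w_def a1 field_simps)
      next
        case 2
        then have "sR * wR i = vR * (mu $ i / Sg $ i $ i)" using IHR by blast
        then show ?thesis using 2 False by (simp add: w_def a2 field_simps)
      qed
    qed
  qed
  then obtain t where t: "\<forall>i\<in>L \<union> R. w i = t * (mu $ i / Sg $ i $ i)" by blast
  have fin: "finite (L \<union> R)" by (simp add: L_def R_def)
  have "set (leaves (Node l r)) = L \<union> R" by (simp add: L_def R_def)
  then show ?case using prop_inv[OF diag pos fin t] hn by simp
qed

theorem mainTheorem15:
  fixes Sg :: "real^'n^'n" and mu :: "real^'n" and gamma :: real and T :: "'n btree"
  assumes diag: "\<And>i j. i \<noteq> j \<Longrightarrow> Sg $ i $ j = 0"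
    and pos: "\<And>i. Sg $ i $ i > 0"
    and gamma: "0 \<le> gamma" "gamma \<le> 1"
    and tree_leaves: "distinct (leaves T)" "set (leaves T) = UNIV"
    and mu_nz: "mu \<noteq> 0"
  shows "\<exists>lam::real. hrp_weights Sg mu gamma T = lam *\<^sub>R (matrix_inv Sg *v mu)"
proof -
  define dv :: "real^'n" where "dv = (\<chi> i. mu $ i / Sg $ i $ i)"
  define Di :: "real^'n^'n" where "Di = (\<chi> i j. if i = j then 1 / Sg $ i $ i else 0)"
  have row: "(\<Sum>k\<in>UNIV. Sg $ i $ k * f k) = Sg $ i $ i * f i" for i and f :: "'n \<Rightarrow> real"
  proof -
    have "(\<Sum>k\<in>UNIV. Sg $ i $ k * f k) = (\<Sum>k\<in>UNIV. if k = i then Sg $ i $ i * f i else 0)"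
      by (rule sum.cong) (auto simp: diag)
    then show ?thesis by simp
  qed
  have col: "(\<Sum>k\<in>UNIV. f k * Sg $ k $ j) = f j * Sg $ j $ j" for j and f :: "'n \<Rightarrow> real"
  proof -
    have "(\<Sum>k\<in>UNIV. f k * Sg $ k $ j) = (\<Sum>k\<in>UNIV. if k = j then f j * Sg $ j $ j else 0)"
      by (rule sum.cong) (auto simp: diag)
    then show ?thesis by simp
  qed
  have m1: "Sg ** Di = mat 1"
    unfolding vec_eq_iff
  proof (intro allI)
    fix i j
    have "(Sg ** Di) $ i $ j = (\<Sum>k\<in>UNIV. Sg $ i $ k * Di $ k $ j)"
      by (simp add: matrix_matrix_mult_def)
    also have "\<dots> = Sg $ i $ i * Di $ i $ j" by (rule row)
    also have "\<dots> = mat 1 $ i $ j" using pos[of i] by (cases "i = j") (simp_all add: Di_def mat_def)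
    finally show "(Sg ** Di) $ i $ j = mat 1 $ i $ j" .
  qed
  have m2: "Di ** Sg = mat 1"
    unfolding vec_eq_iff
  proof (intro allI)
    fix i j
    have "(Di ** Sg) $ i $ j = (\<Sum>k\<in>UNIV. Di $ i $ k * Sg $ k $ j)"
      by (simp add: matrix_matrix_mult_def)
    also have "\<dots> = Di $ i $ j * Sg $ j $ j" by (rule col)
    also have "\<dots> = mat 1 $ i $ j" using pos[of j] by (simp add: Di_def mat_def)
    finally show "(Di ** Sg) $ i $ j = mat 1 $ i $ j" .
  qed
  have inv: "matrix_inv Sg ** Sg = mat 1"
    unfolding matrix_inv_def using someI[of "\<lambda>A'. Sg ** A' = mat 1 \<and> A' ** Sg = mat 1" Di] m1 m2
    by blast
  have "Sg *v dv = mu"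
    unfolding vec_eq_iff
  proof
    fix i
    show "(Sg *v dv) $ i = mu $ i"
      using row[of i "\<lambda>k. dv $ k"] pos[of i] by (simp add: matrix_vector_mult_def dv_def)
  qed
  then have md: "matrix_inv Sg *v mu = dv"
    by (metis inv matrix_vector_mul_assoc matrix_vector_mul_lid)
  obtain w v s where h: "hrp Sg mu gamma T = (w, v, s)" by (cases "hrp Sg mu gamma T") auto
  have I1: "\<forall>k. s * w k = v * (mu $ k / Sg $ k $ k)" and I2: "v = (\<Sum>i\<in>UNIV. (w i)^2 * Sg $ i $ i)"
    using hrp_inv[OF diag pos tree_leaves(1), of mu gamma] h tree_leaves(2) by auto
  show ?thesis
  proof (cases "v = 0")
    case True
    have "\<forall>i\<in>UNIV. (w i)^2 * Sg $ i $ i = 0"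
      using I2 True by (subst sum_nonneg_eq_0_iff[symmetric]) (auto intro!: mult_nonneg_nonneg less_imp_le[OF pos])
    then have "w i = 0" for i using pos[of i] by auto
    then show ?thesis by (intro exI[of _ 0]) (simp add: hrp_weights_def h vec_eq_iff)
  next
    case False
    show ?thesis
    proof (intro exI[of _ "v / s"])
      have "s \<noteq> 0"
      proof
        assume "s = 0"
        then have "mu $ k / Sg $ k $ k = 0" for k using I1 False by auto
        then have "mu $ k = 0" for k using pos[of k] by (metis divide_eq_0_iff less_irrefl)
        then show False using mu_nz by (simp add: vec_eq_iff)
      qed
      have "w i = v / s * (mu $ i / Sg $ i $ i)" for i
      proof -
        have "s * w i = v * (mu $ i / Sg $ i $ i)" using I1 by blast
        then show ?thesis using \<open>s \<noteq> 0\<close> pos[of i] by (simp add: field_simps)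
      qed
      then show "hrp_weights Sg mu gamma T = (v / s) *\<^sub>R (matrix_inv Sg *v mu)"
        by (simp add: hrp_weights_def h md dv_def vec_eq_iff)
    qed
  qed
qed

end
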